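(* Let $A$ be a finite alphabet. If the sliding block code $\phi: A^{\mathbb{N}} \to A^{\mathbb{N}}$ is a local homeomorphism that $*$-commutes with the shift map $\sigma$, then $\phi$ is a $k$-fold covering map for some $k\in\mathbb{N}$.
   Context: $A$ is a finite set with the discrete topology; $\mathbb{N}=\{1,2,3,\dots\}$; $A^{\mathbb{N}}$ is the space of one-sided infinite sequences over $A$ with the product topology; $\sigma(x_1x_2x_3\cdots)=x_2x_3\cdots$. A sliding block code is a map $\tau_d: A^{\mathbb{N}}\to A^{\mathbb{N}}$, $\tau_d(x)_i=d(x_i\cdots x_{i+n-1})$, for some $n\in\mathbb{N}$ and function $d:A^n\to A$. A continuous map $f:X\to Y$ is a local homeomorphism if every $x\in X$ has an open neighborhood $U$ such that $f(U)$ is open in $Y$ and $f:U\to f(U)$ is a homeomorphism. Two functions $S,T: X\to X$ $*$-commute if $ST=TS$ and for every $(y,z)$ with $S(y)=T(z)$ there exists a unique $x$ with $T(x)=y$ and $S(x)=z$. For a continuous surjection $p:E\to B$, an open set $U\subseteq B$ is evenly covered if $p^{-1}(U)$ is a union of pairwise disjoint open sets $V_\alpha$ each of which $p$ maps homeomorphically onto $U$; $p$ is a covering map if every point of $B$ has an evenly covered open neighborhood, and a $k$-fold covering map if moreover $|p^{-1}(b)|=k$ for every $b\in B$. *)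

theory Defs
  imports "HOL-Analysis.Analysis"
begin

text \<open>The full shift: one-sided sequences over a finite alphabet (the type 'a),
  indexed by nat (position 0 plays the role of position 1), with the product
  of discrete topologies.\<close>

definition shift_space :: "(nat \<Rightarrow> 'a) topology" where
  "shift_space = product_topology (\<lambda>_. discrete_topology UNIV) UNIV"

definition shift :: "(nat \<Rightarrow> 'a) \<Rightarrow> (nat \<Rightarrow> 'a)" where
  "shift x = (\<lambda>i. x (Suc i))"

text \<open>Sliding block code tau_d with window length n and block map d : A^n -> A
  (words of length n represented as lists of length n).\<close>
definition sliding_block_code :: "((nat \<Rightarrow> 'a) \<Rightarrow> (nat \<Rightarrow> 'a)) \<Rightarrow> bool" where
  "sliding_block_code \<phi> \<longleftrightarrow>
     (\<exists>n::nat. n \<ge> 1 \<and> (\<exists>d :: 'a list \<Rightarrow> 'a.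
        \<forall>x i. \<phi> x i = d (map (\<lambda>j. x (i + j)) [0..<n])))"

definition local_homeomorphism :: "'a topology \<Rightarrow> 'b topology \<Rightarrow> ('a \<Rightarrow> 'b) \<Rightarrow> bool" where
  "local_homeomorphism X Y f \<longleftrightarrow>
     continuous_map X Y f \<and>
     (\<forall>x \<in> topspace X. \<exists>U. openin X U \<and> x \<in> U \<and> openin Y (f ` U) \<and>
        homeomorphic_map (subtopology X U) (subtopology Y (f ` U)) f)"

definition star_commute :: "('a \<Rightarrow> 'a) \<Rightarrow> ('a \<Rightarrow> 'a) \<Rightarrow> bool" where
  "star_commute S T \<longleftrightarrow>
     S \<circ> T = T \<circ> S \<and>
     (\<forall>y z. S y = T z \<longrightarrow> (\<exists>!x. T x = y \<and> S x = z))"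

definition evenly_covered :: "'a topology \<Rightarrow> 'b topology \<Rightarrow> ('a \<Rightarrow> 'b) \<Rightarrow> 'b set \<Rightarrow> bool" where
  "evenly_covered E B p U \<longleftrightarrow>
     openin B U \<and>
     (\<exists>\<V>. \<Union>\<V> = {x \<in> topspace E. p x \<in> U} \<and> pairwise disjnt \<V> \<and>
        (\<forall>V \<in> \<V>. openin E V \<and> homeomorphic_map (subtopology E V) (subtopology B U) p))"

definition covering_map :: "'a topology \<Rightarrow> 'b topology \<Rightarrow> ('a \<Rightarrow> 'b) \<Rightarrow> bool" where
  "covering_map E B p \<longleftrightarrow>
     continuous_map E B p \<and> p ` topspace E = topspace B \<and>
     (\<forall>b \<in> topspace B. \<exists>U. b \<in> U \<and> evenly_covered E B p U)"

definition k_fold_covering_map :: "nat \<Rightarrow> 'a topology \<Rightarrow> 'b topology \<Rightarrow> ('a \<Rightarrow> 'b) \<Rightarrow> bool" where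
  "k_fold_covering_map k E B p \<longleftrightarrow>
     covering_map E B p \<and>
     (\<forall>b \<in> topspace B. finite {x \<in> topspace E. p x = b} \<and> card {x \<in> topspace E. p x = b} = k)"

end

theory Submission imports Defs begin

lemma lh_cover:
  assumes cX: "compact_space X" and hX: "Hausdorff_space X" and hY: "Hausdorff_space Y"
    and lh: "local_homeomorphism X Y f" and sur: "f ` topspace X = topspace Y"
    and b: "b \<in> topspace Y"
  shows "finite {x \<in> topspace X. f x = b} \<and>
    (\<exists>U. b \<in> U \<and> evenly_covered X Y f U \<and>
       (\<forall>u\<in>U. card {x\<in>topspace X. f x = u} = card {x \<in> topspace X. f x = b}))"
proof -
  define F where "F = {x \<in> topspace X. f x = b}"
  have cont: "continuous_map X Y f" using lh unfolding local_homeomorphism_def by blast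
  have "\<forall>x\<in>topspace X. \<exists>U. openin X U \<and> x \<in> U \<and> openin Y (f ` U) \<and>
        homeomorphic_map (subtopology X U) (subtopology Y (f ` U)) f"
    using lh unfolding local_homeomorphism_def by blast
  then obtain U where U: "\<And>x. x \<in> topspace X \<Longrightarrow> openin X (U x) \<and> x \<in> U x \<and> openin Y (f ` U x) \<and>
        homeomorphic_map (subtopology X (U x)) (subtopology Y (f ` U x)) f"
    by metis
  have injU: "inj_on f (U x)" if "x \<in> topspace X" for x
  proof -
    have "topspace (subtopology X (U x)) = U x"
      using U[OF that] openin_subset[of X "U x"] by auto
    then show ?thesis using homeomorphic_imp_injective_map U[OF that] by metis
  qed
  have ftop: "f x \<in> topspace Y" if "x \<in> topspace X" for x
    using cont that by (simp add: continuous_map_def Pi_iff)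
  have FX: "F \<subseteq> topspace X" unfolding F_def by auto
  have "closedin X F"
    unfolding F_def using closedin_continuous_map_preimage[OF cont closedin_Hausdorff_singleton[OF hY b]]
    by simp
  then have "compactin X F" using cX closedin_compact_space by blast
  have o1: "\<forall>T\<in>U ` F. openin X T" using U FX by blast
  have o2: "F \<subseteq> \<Union>(U ` F)" using U FX by blast
  obtain G where G: "finite G" "G \<subseteq> U ` F" "F \<subseteq> \<Union>G"
    using mp[OF spec[OF conjunct2[OF \<open>compactin X F\<close>[unfolded compactin_def]], of "U ` F"] conjI[OF o1 o2]]
    by blast
  then obtain G' where G': "G' \<subseteq> F" "finite G'" "G = U ` G'"
    by (meson finite_subset_image)
  have "F \<subseteq> G'"
  proof
    fix y assume y: "y \<in> F"
    then obtain g where g: "g \<in> G'" "y \<in> U g" using G G' by auto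
    have "f y = f g" using y g G' unfolding F_def by auto
    moreover have "g \<in> U g" using U g G' FX by blast
    ultimately show "y \<in> G'" using injU[of g] g G' FX by (metis inj_on_def subsetD)
  qed
  then have finF: "finite F" using G' finite_subset by blast
  have "b \<in> f ` topspace X" using sur b by simp
  then obtain b0 where b0: "b0 \<in> topspace X" "f b0 = b" by (rule imageE) simp
  then have Fne: "F \<noteq> {}" unfolding F_def by auto
  have "\<forall>p. \<exists>R. fst p \<in> F \<and> snd p \<in> F \<and> fst p \<noteq> snd p \<longrightarrow>
      openin X (fst R) \<and> openin X (snd R) \<and> fst p \<in> fst R \<and> snd p \<in> snd R \<and> disjnt (fst R) (snd R)"
  proof
    fix p :: "'a \<times> 'a"
    show "\<exists>R. fst p \<in> F \<and> snd p \<in> F \<and> fst p \<noteq> snd p \<longrightarrow>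
      openin X (fst R) \<and> openin X (snd R) \<and> fst p \<in> fst R \<and> snd p \<in> snd R \<and> disjnt (fst R) (snd R)"
    proof (cases "fst p \<in> F \<and> snd p \<in> F \<and> fst p \<noteq> snd p")
      case True
      then have "fst p \<in> topspace X" "snd p \<in> topspace X" "fst p \<noteq> snd p" using FX by auto
      then obtain A B where "openin X A" "openin X B" "fst p \<in> A" "snd p \<in> B" "disjnt A B"
        using hX[unfolded Hausdorff_space_def, rule_format, of "fst p" "snd p"] by auto
      then show ?thesis by (intro exI[of _ "(A,B)"]) auto
    qed auto
  qed
  from choice[OF this] obtain R where R: "\<forall>p. fst p \<in> F \<and> snd p \<in> F \<and> fst p \<noteq> snd p \<longrightarrow>
      openin X (fst (R p)) \<and> openin X (snd (R p)) \<and> fst p \<in> fst (R p) \<and> snd p \<in> snd (R p) \<and> disjnt (fst (R p)) (snd (R p))"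
    by blast
  define P where "P x y = fst (R (x,y))" for x y
  define Q where "Q x y = snd (R (x,y))" for x y
  have PQ: "openin X (P x y) \<and> openin X (Q x y) \<and> x \<in> P x y \<and> y \<in> Q x y \<and> disjnt (P x y) (Q x y)"
    if "x \<in> F" "y \<in> F" "x \<noteq> y" for x y
    using that unfolding P_def Q_def using R[rule_format, of "(x,y)"] by simp
  define W where "W x = (\<Inter>y \<in> F - {x}. P x y \<inter> Q y x) \<inter> topspace X" for x
  have Wo: "openin X (W x)" if "x \<in> F" for x
    unfolding W_def using that PQ finF by (intro openin_INT) auto
  have Wx: "x \<in> W x" if "x \<in> F" for x
    unfolding W_def using that PQ FX by auto
  have Wd: "disjnt (W x) (W y)" if "x \<in> F" "y \<in> F" "x \<noteq> y" for x y
  proof -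
    have "W x \<subseteq> P x y" "W y \<subseteq> Q x y" unfolding W_def using that by auto
    then show ?thesis using PQ[OF that] by (meson disjnt_subset1 disjnt_subset2)
  qed
  define V where "V x = W x \<inter> U x" for x
  have Vo: "openin X (V x)" if "x \<in> F" for x
    unfolding V_def using Wo U that FX by blast
  have Vx: "x \<in> V x" if "x \<in> F" for x
    unfolding V_def using Wx U that FX by blast
  have Vd: "disjnt (V x) (V y)" if "x \<in> F" "y \<in> F" "x \<noteq> y" for x y
    using Wd[OF that] unfolding V_def by (meson disjnt_subset1 disjnt_subset2 inf_le1)
  have Vsub: "V x \<subseteq> U x" for x unfolding V_def by auto
  have Vhom: "homeomorphic_map (subtopology X (V x)) (subtopology Y (f ` V x)) f" if "x \<in> F" for x
  proof -
    have h: "homeomorphic_map (subtopology X (U x)) (subtopology Y (f ` U x)) f" using U that FX by blast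
    have "homeomorphic_map (subtopology (subtopology X (U x)) (V x)) (subtopology (subtopology Y (f ` U x)) (f ` V x)) f"
      apply (rule homeomorphic_map_subtopologies[OF h])
      using Vsub openin_subset[OF Vo[OF that]] U that FX openin_subset ftop by auto
    then show ?thesis using Vsub by (simp add: subtopology_subtopology inf.absorb2 image_mono)
  qed
  have fVo: "openin Y (f ` V x)" if "x \<in> F" for x
  proof -
    have h: "homeomorphic_map (subtopology X (U x)) (subtopology Y (f ` U x)) f" using U that FX by blast
    have "openin (subtopology X (U x)) (V x)"
      using openin_open_subtopology[of X "U x" "V x"] Vo[OF that] Vsub U that FX by blast
    then have "openin (subtopology Y (f ` U x)) (f ` V x)"
      using homeomorphic_imp_open_map[OF h] open_map_def by blast
    then show ?thesis using openin_open_subtopology[of Y "f ` U x" "f ` V x"] U that FX by blast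
  qed
  define C where "C = topspace X - \<Union>(V ` F)"
  have "closedin X C" unfolding C_def
    by (intro closedin_diff closedin_topspace openin_Union) (auto intro: Vo)
  then have "compactin X C" using cX closedin_compact_space by blast
  then have "compactin Y (f ` C)" using image_compactin cont by blast
  then have fC: "closedin Y (f ` C)" using compactin_imp_closedin hY by blast
  have bC: "b \<notin> f ` C"
  proof
    assume "b \<in> f ` C"
    then obtain c where "c \<in> C" "f c = b" by blast
    then have "c \<in> F" unfolding C_def F_def by auto
    then show False using \<open>c \<in> C\<close> Vx unfolding C_def by blast
  qed
  define U0 where "U0 = (topspace Y - f ` C) \<inter> \<Inter>((\<lambda>x. f ` V x) ` F)"
  have U0o: "openin Y U0" unfolding U0_def
    using fC fVo finF by (intro openin_Int_Inter) auto
  have bU0: "b \<in> U0" unfolding U0_def using bC b Vx unfolding F_def by auto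
  have U0V: "U0 \<subseteq> f ` V x" if "x \<in> F" for x using that unfolding U0_def by auto
  define S where "S x = V x \<inter> {y \<in> topspace X. f y \<in> U0}" for x
  have "evenly_covered X Y f U0"
    unfolding evenly_covered_def
  proof (intro conjI exI[of _ "S ` F"])
    show "openin Y U0" by fact
    show "\<Union>(S ` F) = {x \<in> topspace X. f x \<in> U0}"
    proof (rule set_eqI, rule iffI)
      fix y assume "y \<in> \<Union>(S ` F)" then show "y \<in> {x \<in> topspace X. f x \<in> U0}"
        unfolding S_def by auto
    next
      fix y assume y: "y \<in> {x \<in> topspace X. f x \<in> U0}"
      then have "y \<notin> C" unfolding U0_def by auto
      then obtain x where "x \<in> F" "y \<in> V x" using y unfolding C_def by auto
      then show "y \<in> \<Union>(S ` F)" using y unfolding S_def by auto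
    qed
    show "pairwise disjnt (S ` F)"
    proof (rule pairwiseI)
      fix A B assume "A \<in> S ` F" "B \<in> S ` F" "A \<noteq> B"
      then obtain x y where "x \<in> F" "y \<in> F" "A = S x" "B = S y" "x \<noteq> y" by blast
      then show "disjnt A B" using Vd[of x y] unfolding S_def disjnt_def by blast
    qed
    show "\<forall>V\<in>S ` F. openin X V \<and> homeomorphic_map (subtopology X V) (subtopology Y U0) f"
    proof
      fix T assume "T \<in> S ` F"
      then obtain x where x: "x \<in> F" "T = S x" by blast
      have "openin X (S x)" unfolding S_def
        using Vo[OF x(1)] openin_continuous_map_preimage[OF cont U0o] by blast
      moreover have "homeomorphic_map (subtopology X (S x)) (subtopology Y U0) f"
      proof -
        have "homeomorphic_map (subtopology (subtopology X (V x)) (S x)) (subtopology (subtopology Y (f ` V x)) U0) f"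
          apply (rule homeomorphic_map_subtopologies[OF Vhom[OF x(1)]])
          using U0V[OF x(1)] openin_subset[OF Vo[OF x(1)]] openin_subset[OF U0o] unfolding S_def by auto
        then show ?thesis using U0V[OF x(1)] unfolding S_def
          by (simp add: subtopology_subtopology inf.absorb2 Int_assoc)
      qed
      ultimately show "openin X T \<and> homeomorphic_map (subtopology X T) (subtopology Y U0) f" using x by simp
    qed
  qed
  moreover have "card {x\<in>topspace X. f x = u} = card F" if u: "u \<in> U0" for u
  proof -
    have "bij_betw (\<lambda>x. inv_into (V x) f u) F {x\<in>topspace X. f x = u}"
    proof (rule bij_betwI')
      fix x y assume xy: "x \<in> F" "y \<in> F"
      have ix: "inv_into (V x) f u \<in> V x" "f (inv_into (V x) f u) = u"
        using U0V[OF xy(1)] u by (auto intro: inv_into_into f_inv_into_f)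
      have iy: "inv_into (V y) f u \<in> V y" "f (inv_into (V y) f u) = u"
        using U0V[OF xy(2)] u by (auto intro: inv_into_into f_inv_into_f)
      show "(inv_into (V x) f u = inv_into (V y) f u) = (x = y)"
        using Vd[OF xy] ix iy by (metis disjnt_iff)
    next
      fix x assume x: "x \<in> F"
      have ix: "inv_into (V x) f u \<in> V x" "f (inv_into (V x) f u) = u"
        using U0V[OF x] u by (auto intro: inv_into_into f_inv_into_f)
      then show "inv_into (V x) f u \<in> {x \<in> topspace X. f x = u}"
        using openin_subset[OF Vo[OF x]] by auto
    next
      fix y assume y: "y \<in> {x \<in> topspace X. f x = u}"
      then have "y \<notin> C" using u unfolding U0_def by auto
      then obtain x where x: "x \<in> F" "y \<in> V x" using y unfolding C_def by auto
      have "inv_into (V x) f u = y"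
        using inv_into_f_f[OF inj_on_subset[OF injU Vsub] x(2)] y x FX by auto
      then show "\<exists>x\<in>F. y = inv_into (V x) f u" using x by metis
    qed
    then show ?thesis by (metis bij_betw_same_card)
  qed
  ultimately show ?thesis using finF bU0 unfolding F_def by blast
qed


lemma topspace_shift [simp]: "topspace (shift_space :: (nat \<Rightarrow> 'a) topology) = UNIV"
  unfolding shift_space_def by (simp add: PiE_UNIV_domain)

lemma compact_shift: "compact_space (shift_space :: (nat \<Rightarrow> 'a::finite) topology)"
  unfolding shift_space_def
  by (simp add: compact_space_product_topology compact_space_discrete_topology)

lemma hausdorff_shift: "Hausdorff_space (shift_space :: (nat \<Rightarrow> 'a) topology)"
  unfolding shift_space_def
  by (simp add: Hausdorff_space_product_topology)

lemma cyl:
  assumes "openin (shift_space :: (nat \<Rightarrow> 'a) topology) S" "w \<in> S"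
  shows "\<exists>m. \<forall>v. (\<forall>i<m. v i = w i) \<longrightarrow> v \<in> S"
proof -
  obtain U where U: "finite {i. U i \<noteq> (UNIV :: 'a set)}" "w \<in> Pi\<^sub>E UNIV U" "Pi\<^sub>E UNIV U \<subseteq> S"
    using assms unfolding shift_space_def openin_product_topology_alt by auto
  define m where "m = Suc (Max (insert 0 {i. U i \<noteq> UNIV}))"
  have "v \<in> S" if v: "\<forall>i<m. v i = w i" for v
  proof -
    have "v i \<in> U i" for i
    proof (cases "U i = UNIV")
      case False
      then have "i \<le> Max (insert 0 {i. U i \<noteq> UNIV})" using U(1) by simp
      then have "i < m" unfolding m_def by simp
      then show ?thesis using v U(2) by (simp add: PiE_UNIV_domain Pi_iff)
    qed simp
    then show ?thesis using U(3) by (auto simp: PiE_UNIV_domain)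
  qed
  then show ?thesis by blast
qed

lemma shiftpow: "(shift ^^ m) z = (\<lambda>i. z (i + m))"
  by (induction m arbitrary: z) (auto simp: shift_def funpow_Suc_right)

lemma shiftpow_prepend: "(shift ^^ m) (\<lambda>i. if i < m then w i else z (i - m)) = z"
  by (simp add: shiftpow)

theorem proposition5p13:
  fixes \<phi> :: "(nat \<Rightarrow> 'a::finite) \<Rightarrow> (nat \<Rightarrow> 'a)"
  assumes "sliding_block_code \<phi>"
    and "local_homeomorphism shift_space shift_space \<phi>"
    and "star_commute \<phi> shift"
  shows "\<exists>k::nat. k \<ge> 1 \<and> k_fold_covering_map k shift_space shift_space \<phi>"
proof -
  have comm: "\<phi> (shift x) = shift (\<phi> x)" for x
    using assms(3) unfolding star_commute_def by (metis comp_apply)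
  have uniq: "\<exists>!x. shift x = y \<and> \<phi> x = z" if "\<phi> y = shift z" for y z
    using assms(3) that unfolding star_commute_def by blast
  have lh: "local_homeomorphism shift_space shift_space \<phi>" by fact
  have cont: "continuous_map shift_space shift_space \<phi>"
    using lh unfolding local_homeomorphism_def by blast
  have "\<forall>x\<in>topspace (shift_space :: (nat \<Rightarrow> 'a) topology). \<exists>U. openin shift_space U \<and> x \<in> U \<and> openin shift_space (\<phi> ` U)"
    using lh unfolding local_homeomorphism_def by blast
  then have "\<forall>x. \<exists>U. openin shift_space U \<and> x \<in> U \<and> openin shift_space (\<phi> ` U)" by simp
  then obtain U where U: "\<And>x. openin shift_space (U x) \<and> x \<in> U x \<and> openin shift_space (\<phi> ` U x)"
    by metis
  have Ieq: "range \<phi> = (\<Union>x. \<phi> ` U x)" using U by blast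
  have openI: "openin shift_space (range \<phi>)" unfolding Ieq using U by blast
  have fwd: "(shift ^^ m) z \<in> range \<phi>" if zI: "z \<in> range \<phi>" for z m
  proof -
    obtain x where "z = \<phi> x" using zI by blast
    moreover have "(shift ^^ m) (\<phi> x) = \<phi> ((shift ^^ m) x)"
      by (induction m) (auto simp: comm)
    ultimately show ?thesis by simp
  qed
  have surj: "z \<in> range \<phi>" for z
  proof -
    obtain m where m: "\<forall>v. (\<forall>i<m. v i = \<phi> undefined i) \<longrightarrow> v \<in> range \<phi>"
      using cyl[OF openI, of "\<phi> undefined"] by blast
    have "(\<lambda>i. if i < m then \<phi> undefined i else z (i - m)) \<in> range \<phi>" using m by simp
    from fwd[OF this, of m] show ?thesis by (simp only: shiftpow_prepend)
  qed
  have sur: "\<phi> ` topspace shift_space = topspace shift_space" using surj by auto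
  define g where "g z = card {x. \<phi> x = z}" for z
  have ginv: "g (shift z) = g z" for z
  proof -
    have "bij_betw shift {x. \<phi> x = z} {x. \<phi> x = shift z}"
    proof (rule bij_betwI')
      fix x y assume xy: "x \<in> {x. \<phi> x = z}" "y \<in> {x. \<phi> x = z}"
      then have "\<phi> (shift x) = shift z" using comm by simp
      then have "\<exists>!w. shift w = shift x \<and> \<phi> w = z" by (rule uniq)
      then show "(shift x = shift y) = (x = y)" using xy by (metis (mono_tags, lifting) mem_Collect_eq)
    next
      fix x assume "x \<in> {x. \<phi> x = z}" then show "shift x \<in> {x. \<phi> x = shift z}" by (simp add: comm)
    next
      fix y assume "y \<in> {x. \<phi> x = shift z}"
      then have "\<phi> y = shift z" by simp
      then have "\<exists>!w. shift w = y \<and> \<phi> w = z" by (rule uniq)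
      then obtain x where "shift x = y" "\<phi> x = z" by blast
      then show "\<exists>x\<in>{x. \<phi> x = z}. y = shift x" by auto
    qed
    then show ?thesis unfolding g_def by (metis bij_betw_same_card)
  qed
  have ginvp: "g ((shift ^^ m) z) = g z" for m z
    by (induction m arbitrary: z) (auto simp: funpow_Suc_right ginv)
  have cov: "finite {x. \<phi> x = b} \<and> (\<exists>U. b \<in> U \<and> evenly_covered shift_space shift_space \<phi> U \<and>
       (\<forall>u\<in>U. g u = g b))" for b
  proof -
    have fib: "{x \<in> topspace shift_space. \<phi> x = u} = {x. \<phi> x = u}" for u by simp
    show ?thesis
      using lh_cover[OF compact_shift hausdorff_shift hausdorff_shift lh sur, of b]
      unfolding fib g_def by simp
  qed
  have gconst: "g z = g b" for z b
  proof -
    obtain V where V: "b \<in> V" "evenly_covered shift_space shift_space \<phi> V" "\<forall>u\<in>V. g u = g b"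
      using cov by blast
    have "openin shift_space V" using V(2) unfolding evenly_covered_def by blast
    then obtain m where m: "\<forall>v. (\<forall>i<m. v i = b i) \<longrightarrow> v \<in> V" using cyl V(1) by blast
    define z' where "z' = (\<lambda>i. if i < m then b i else z (i - m))"
    have "z' \<in> V" using m unfolding z'_def by simp
    then have "g z' = g b" using V by blast
    moreover have "g z = g z'" using ginvp[of m z'] unfolding z'_def by (simp only: shiftpow_prepend)
    ultimately show ?thesis by simp
  qed
  define k where "k = g (\<phi> undefined)"
  have "k \<ge> 1"
  proof -
    have "finite {x. \<phi> x = \<phi> undefined}" using cov by blast
    moreover have "{x. \<phi> x = \<phi> undefined} \<noteq> {}" by blast
    ultimately have "card {x. \<phi> x = \<phi> undefined} > 0" using card_gt_0_iff by blast
    then show ?thesis unfolding k_def g_def by linarith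
  qed
  moreover have "k_fold_covering_map k shift_space shift_space \<phi>"
    unfolding k_fold_covering_map_def covering_map_def
  proof (intro conjI ballI)
    show "continuous_map shift_space shift_space \<phi>" by fact
    show "\<phi> ` topspace shift_space = topspace shift_space" by fact
  next
    fix b :: "nat \<Rightarrow> 'a"
    show "\<exists>U. b \<in> U \<and> evenly_covered shift_space shift_space \<phi> U" using cov[of b] by blast
  next
    fix b :: "nat \<Rightarrow> 'a"
    show "finite {x \<in> topspace shift_space. \<phi> x = b}" using cov[of b] by simp
  next
    fix b :: "nat \<Rightarrow> 'a"
    have "g b = k" unfolding k_def by (rule gconst)
    then show "card {x \<in> topspace shift_space. \<phi> x = b} = k" unfolding g_def by simp
  qed
  ultimately show ?thesis by blast
qed

end
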